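(* Let $(X,T)$ be a topological dynamical system and fix the system of coefficients $c_S^n=2^{-n}$. Then for any open cover $\mathscr U$ of $X$, $\operatorname{Acc}(X,\mathscr U,T)=\frac12\operatorname{Asc}(X,\mathscr U,T)$.
   Context: $(X,T)$: compact Hausdorff $X$, continuous $T$. $n^*=\{0,\dots,n-1\}$; $\mathscr U_S=\bigvee_{i\in S}T^{-i}\mathscr U$ ($\mathscr U_\emptyset=\{X\}$); $N(\mathscr U)$ is the minimal cardinality of a subcover. $\operatorname{Asc}(X,\mathscr U,T)=\lim_{n\to\infty}\frac1n\sum_{S\subset n^*}c_S^n\log N(\mathscr U_S)$ and the average configuration complexity is $\operatorname{Acc}(X,\mathscr U,T)=\lim_{n\to\infty}\frac1n\sum_{S\subset n^*,\,0\in S}c_S^n\log N(\mathscr U_S)$. *)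

theory Defs
  imports "HOL-Analysis.Analysis"
begin

definition iter_preimage :: "'a topology \<Rightarrow> ('a \<Rightarrow> 'a) \<Rightarrow> nat \<Rightarrow> 'a set \<Rightarrow> 'a set" where
  "iter_preimage X T i A = {x \<in> topspace X. (T ^^ i) x \<in> A}"

definition join_cover :: "'a topology \<Rightarrow> ('a \<Rightarrow> 'a) \<Rightarrow> 'a set set \<Rightarrow> nat set \<Rightarrow> 'a set set" where
  "join_cover X T U S =
     {topspace X \<inter> (\<Inter>i\<in>S. iter_preimage X T i (f i)) | f. \<forall>i\<in>S. f i \<in> U}"

definition cover_num :: "'a topology \<Rightarrow> 'a set set \<Rightarrow> nat" where
  "cover_num X V = (LEAST k. \<exists>W\<subseteq>V. finite W \<and> card W = k \<and> \<Union>W = topspace X)"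

definition open_cover :: "'a topology \<Rightarrow> 'a set set \<Rightarrow> bool" where
  "open_cover X U \<longleftrightarrow> (\<forall>V\<in>U. openin X V) \<and> \<Union>U = topspace X"

definition asc_seq :: "(nat \<Rightarrow> nat set \<Rightarrow> real) \<Rightarrow> 'a topology \<Rightarrow> ('a \<Rightarrow> 'a) \<Rightarrow> 'a set set \<Rightarrow> nat \<Rightarrow> real" where
  "asc_seq c X T U n = (1 / real n) * (\<Sum>S\<in>Pow {..<n}. c n S * ln (real (cover_num X (join_cover X T U S))))"

definition acc_seq :: "(nat \<Rightarrow> nat set \<Rightarrow> real) \<Rightarrow> 'a topology \<Rightarrow> ('a \<Rightarrow> 'a) \<Rightarrow> 'a set set \<Rightarrow> nat \<Rightarrow> real" where
  "acc_seq c X T U n = (1 / real n) * (\<Sum>S\<in>{S. S \<subseteq> {..<n} \<and> 0 \<in> S}. c n S * ln (real (cover_num X (join_cover X T U S))))"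

definition Asc :: "(nat \<Rightarrow> nat set \<Rightarrow> real) \<Rightarrow> 'a topology \<Rightarrow> ('a \<Rightarrow> 'a) \<Rightarrow> 'a set set \<Rightarrow> real" where
  "Asc c X T U = lim (asc_seq c X T U)"

definition Acc :: "(nat \<Rightarrow> nat set \<Rightarrow> real) \<Rightarrow> 'a topology \<Rightarrow> ('a \<Rightarrow> 'a) \<Rightarrow> 'a set set \<Rightarrow> real" where
  "Acc c X T U = lim (acc_seq c X T U)"

end

theory Submission
  imports Defs
begin

lemma fekete:
  fixes e :: "nat \<Rightarrow> real"
  assumes nn: "\<And>n. 0 \<le> e n" and sa: "\<And>m n. e (m+n) \<le> e m + e n"
  shows "convergent (\<lambda>n. e n / real n)"
proof -
  define Q where "Q = (\<lambda>n. e n / real n) ` {1..}"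
  define L where "L = Inf Q"
  have bdd: "bdd_below Q" unfolding Q_def using nn by (auto intro!: bdd_belowI[of _ 0])
  have ne: "Q \<noteq> {}" unfolding Q_def by auto
  have low: "L \<le> e n / real n" if "n \<ge> 1" for n
    unfolding L_def using that bdd by (auto simp: Q_def intro!: cInf_lower)
  have rep: "e (q*k + r) \<le> real q * e k + e r" for q k r
  proof (induction q)
    case 0 show ?case by simp
  next
    case (Suc q)
    have "e (Suc q * k + r) = e (k + (q*k+r))" by (simp add: add.assoc)
    also have "\<dots> \<le> e k + e (q*k+r)" by (rule sa)
    also have "\<dots> \<le> e k + (real q * e k + e r)" using Suc by simp
    finally show ?case by (simp add: algebra_simps)
  qed
  have "(\<lambda>n. e n / real n) \<longlonglongrightarrow> L"
  proof (rule LIMSEQ_I)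
    fix \<epsilon> :: real assume ep: "\<epsilon> > 0"
    have "Inf Q < L + \<epsilon>/2" using ep by (simp add: L_def)
    then obtain x where "x \<in> Q" "x < L + \<epsilon>/2" using cInf_lessD[OF ne] by blast
    then obtain k where k: "k \<ge> 1" "e k / real k < L + \<epsilon>/2" unfolding Q_def by auto
    define M where "M = (\<Sum>r<k. e r)"
    have M0: "M \<ge> 0" using nn by (simp add: M_def sum_nonneg)
    obtain N0 :: nat where N0: "M / (\<epsilon>/2) < N0" using reals_Archimedean2 by blast
    show "\<exists>no. \<forall>n\<ge>no. norm (e n / real n - L) < \<epsilon>"
    proof (intro exI allI impI)
      fix n assume nN: "n \<ge> max 1 N0"
      have n1: "n \<ge> 1" using nN by simp
      have "e n = e (n div k * k + n mod k)" by simp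
      also have "\<dots> \<le> real (n div k) * e k + e (n mod k)" by (rule rep)
      finally have a: "e n \<le> real (n div k) * e k + e (n mod k)" .
      have b: "e (n mod k) \<le> M" unfolding M_def
        by (rule member_le_sum) (use k nn in auto)
      have c: "real (n div k) * e k \<le> real n / real k * e k"
        by (rule mult_right_mono) (use nn of_nat_div_le_of_nat in auto)
      have "e n \<le> real n / real k * e k + M" using a b c by linarith
      hence "e n / real n \<le> (real n / real k * e k + M) / real n"
        using n1 by (simp add: divide_right_mono)
      also have "\<dots> = e k / real k + M / real n" using n1 by (simp add: field_simps)
      finally have d: "e n / real n \<le> e k / real k + M / real n" .
      have "M < \<epsilon>/2 * real N0" using N0 ep by (simp add: field_simps)
      also have "\<dots> \<le> \<epsilon>/2 * real n" using nN ep by simp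
      finally have f: "M / real n < \<epsilon>/2" using n1 by (simp add: field_simps)
      have "\<bar>e n / real n - L\<bar> < \<epsilon>" using d k(2) low[OF n1] f by linarith
      then show "norm (e n / real n - L) < \<epsilon>" by simp
    qed
  qed
  thus ?thesis unfolding convergent_def by blast
qed


definition has_cover :: "'a topology \<Rightarrow> 'a set set \<Rightarrow> bool" where
  "has_cover X V \<longleftrightarrow> (\<exists>W\<subseteq>V. finite W \<and> \<Union>W = topspace X)"

lemma cover_num_le:
  assumes "W \<subseteq> V" "finite W" "\<Union>W = topspace X"
  shows "cover_num X V \<le> card W"
  unfolding cover_num_def by (rule Least_le) (use assms in blast)

lemma cover_num_ex:
  assumes "has_cover X V"
  shows "\<exists>W\<subseteq>V. finite W \<and> card W = cover_num X V \<and> \<Union>W = topspace X"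
proof -
  from assms obtain W where "W\<subseteq>V" "finite W" "\<Union>W = topspace X" unfolding has_cover_def by blast
  hence "\<exists>k. \<exists>W\<subseteq>V. finite W \<and> card W = k \<and> \<Union>W = topspace X" by blast
  thus ?thesis unfolding cover_num_def by (rule LeastI_ex)
qed

lemma ln_nat_nonneg: "0 \<le> ln (real (k::nat))"
  by (cases "k = 0") auto

lemma ln_nat_mono: "(k::nat) \<le> m \<Longrightarrow> ln (real k) \<le> ln (real m)"
  by (cases "k = 0") (auto simp: ln_nat_nonneg)

lemma ln_nat_mult:
  assumes "(k::nat) \<le> p * q" shows "ln (real k) \<le> ln (real p) + ln (real q)"
proof (cases "k = 0")
  case True thus ?thesis using ln_nat_nonneg[of p] ln_nat_nonneg[of q] by simp
next
  case False
  hence "p > 0" "q > 0" using assms by (auto intro!: gr0I)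
  have "ln (real k) \<le> ln (real (p*q))" using assms by (rule ln_nat_mono)
  also have "\<dots> = ln (real p) + ln (real q)" using \<open>p>0\<close> \<open>q>0\<close> by (simp add: ln_mult)
  finally show ?thesis .
qed

lemma sum_fst_prod: "finite B \<Longrightarrow> (\<Sum>p\<in>A\<times>B. f (fst p)) = real (card B) * (\<Sum>x\<in>A. (f x::real))"
  by (simp add: sum.cartesian_product' sum_distrib_right mult.commute)
lemma sum_snd_prod: "finite A \<Longrightarrow> (\<Sum>p\<in>A\<times>B. f (snd p)) = real (card A) * (\<Sum>x\<in>B. (f x::real))"
  by (simp add: sum.cartesian_product' sum_distrib_right mult.commute)
lemma half_pow: "(1/2::real)^(m+n) * 2^n = (1/2)^m"
  by (simp add: power_add power_one_over field_simps)
lemma img_shift: "(+) n ` {i. n+i\<in>S} = {x\<in>S. n \<le> (x::nat)}"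
proof
  show "(+) n ` {i. n+i\<in>S} \<subseteq> {x\<in>S. n \<le> x}" by auto
  show "{x\<in>S. n\<le>x} \<subseteq> (+) n ` {i. n+i\<in>S}"
  proof
    fix x assume "x\<in>{x\<in>S. n\<le>x}" then show "x \<in> (+) n ` {i. n + i \<in> S}" by (intro image_eqI[of x _ "x-n"]) auto
  qed
qed

context
  fixes X :: "'a topology" and T :: "'a \<Rightarrow> 'a" and U :: "'a set set"
  assumes cpt: "compact_space X" and cont: "continuous_map X X T" and oc: "open_cover X U"
begin

lemma iter_top: "x \<in> topspace X \<Longrightarrow> (T^^n) x \<in> topspace X"
  by (induction n) (use cont in \<open>auto simp: continuous_map_def\<close>)

lemma J_sub: "v \<in> join_cover X T U S \<Longrightarrow> v \<subseteq> topspace X"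
  by (auto simp: join_cover_def)

lemma mono_cover:
  assumes "A \<subseteq> B" "has_cover X (join_cover X T U B)"
  shows "has_cover X (join_cover X T U A) \<and> cover_num X (join_cover X T U A) \<le> cover_num X (join_cover X T U B)"
proof -
  obtain W where W: "W \<subseteq> join_cover X T U B" "finite W" "card W = cover_num X (join_cover X T U B)" "\<Union>W = topspace X"
    using cover_num_ex[OF assms(2)] by blast
  have "\<forall>w\<in>W. \<exists>v. v \<in> join_cover X T U A \<and> w \<subseteq> v"
  proof
    fix w assume "w \<in> W"
    then obtain f where f: "\<forall>i\<in>B. f i \<in> U" "w = topspace X \<inter> (\<Inter>i\<in>B. iter_preimage X T i (f i))"
      using W(1) unfolding join_cover_def by blast
    show "\<exists>v. v \<in> join_cover X T U A \<and> w \<subseteq> v"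
    proof (intro exI conjI)
      show "w \<subseteq> topspace X \<inter> (\<Inter>i\<in>A. iter_preimage X T i (f i))"
        unfolding f(2) using assms(1) by blast
      show "topspace X \<inter> (\<Inter>i\<in>A. iter_preimage X T i (f i)) \<in> join_cover X T U A"
        unfolding join_cover_def using f(1) assms(1) by blast
    qed
  qed
  then have "\<exists>g. \<forall>w\<in>W. g w \<in> join_cover X T U A \<and> w \<subseteq> g w" by (rule bchoice)
  then obtain g where g: "\<forall>w\<in>W. g w \<in> join_cover X T U A \<and> w \<subseteq> g w" by blast
  have sub: "g ` W \<subseteq> join_cover X T U A" using g by auto
  have un: "\<Union>(g ` W) = topspace X"
  proof
    show "\<Union>(g ` W) \<subseteq> topspace X" using sub J_sub by (meson Union_least subsetD)
    show "topspace X \<subseteq> \<Union>(g ` W)" using g W(4) by blast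
  qed
  have fin: "finite (g ` W)" using W(2) by simp
  have hc: "has_cover X (join_cover X T U A)" unfolding has_cover_def using sub fin un by blast
  have "card (g ` W) \<le> card W" by (rule card_image_le[OF W(2)])
  then show ?thesis using cover_num_le[OF sub fin un] W(3) hc by linarith
qed

lemma funpow_shift: "(T^^(n+i)) x = (T^^i) ((T^^n) x)"
  by (metis add.commute comp_apply funpow_add)

lemma shift_cover:
  assumes "has_cover X (join_cover X T U S)"
  shows "has_cover X (join_cover X T U ((+) n ` S)) \<and> cover_num X (join_cover X T U ((+) n ` S)) \<le> cover_num X (join_cover X T U S)"
proof -
  obtain W where W: "W \<subseteq> join_cover X T U S" "finite W" "card W = cover_num X (join_cover X T U S)" "\<Union>W = topspace X"
    using cover_num_ex[OF assms] by blast
  define h where "h w = {x \<in> topspace X. (T^^n) x \<in> w}" for w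
  have sub: "h ` W \<subseteq> join_cover X T U ((+) n ` S)"
  proof
    fix v assume "v \<in> h ` W"
    then obtain w where w: "w \<in> W" "v = h w" by blast
    then obtain f where f: "\<forall>i\<in>S. f i \<in> U" "w = topspace X \<inter> (\<Inter>i\<in>S. iter_preimage X T i (f i))"
      using W(1) unfolding join_cover_def by blast
    have "v = topspace X \<inter> (\<Inter>j\<in>(+) n ` S. iter_preimage X T j (f (j - n)))"
      unfolding w(2) h_def f(2) iter_preimage_def using iter_top by (auto simp: funpow_shift)
    then show "v \<in> join_cover X T U ((+) n ` S)" unfolding join_cover_def
      by (intro CollectI exI[of _ "\<lambda>j. f (j - n)"]) (use f(1) in auto)
  qed
  have un: "\<Union>(h ` W) = topspace X"
  proof
    show "\<Union>(h ` W) \<subseteq> topspace X" unfolding h_def by blast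
    show "topspace X \<subseteq> \<Union>(h ` W)"
    proof
      fix x assume x: "x \<in> topspace X"
      then have "(T^^n) x \<in> \<Union>W" using W(4) iter_top by simp
      then obtain w where "w \<in> W" "(T^^n) x \<in> w" by blast
      then show "x \<in> \<Union>(h ` W)" using x unfolding h_def by blast
    qed
  qed
  have fin: "finite (h ` W)" using W(2) by simp
  have hc: "has_cover X (join_cover X T U ((+) n ` S))" unfolding has_cover_def using sub fin un by blast
  have "card (h ` W) \<le> card W" by (rule card_image_le[OF W(2)])
  then show ?thesis using cover_num_le[OF sub fin un] W(3) hc by linarith
qed

lemma union_cover:
  assumes "A \<inter> B = {}" "has_cover X (join_cover X T U A)" "has_cover X (join_cover X T U B)"
  shows "has_cover X (join_cover X T U (A \<union> B)) \<and> cover_num X (join_cover X T U (A \<union> B)) \<le> cover_num X (join_cover X T U A) * cover_num X (join_cover X T U B)"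
proof -
  obtain W1 where W1: "W1 \<subseteq> join_cover X T U A" "finite W1" "card W1 = cover_num X (join_cover X T U A)" "\<Union>W1 = topspace X"
    using cover_num_ex[OF assms(2)] by blast
  obtain W2 where W2: "W2 \<subseteq> join_cover X T U B" "finite W2" "card W2 = cover_num X (join_cover X T U B)" "\<Union>W2 = topspace X"
    using cover_num_ex[OF assms(3)] by blast
  define V where "V = (\<lambda>(a,b). a \<inter> b) ` (W1 \<times> W2)"
  have sub: "V \<subseteq> join_cover X T U (A \<union> B)"
  proof
    fix v assume "v \<in> V"
    then obtain a b where ab: "a \<in> W1" "b \<in> W2" "v = a \<inter> b" unfolding V_def by blast
    obtain f where f: "\<forall>i\<in>A. f i \<in> U" "a = topspace X \<inter> (\<Inter>i\<in>A. iter_preimage X T i (f i))"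
      using W1(1) ab(1) unfolding join_cover_def by blast
    obtain g where g: "\<forall>i\<in>B. g i \<in> U" "b = topspace X \<inter> (\<Inter>i\<in>B. iter_preimage X T i (g i))"
      using W2(1) ab(2) unfolding join_cover_def by blast
    define h where "h i = (if i \<in> A then f i else g i)" for i
    have eA: "(\<Inter>i\<in>A. iter_preimage X T i (h i)) = (\<Inter>i\<in>A. iter_preimage X T i (f i))"
      by (rule INF_cong[OF refl]) (simp add: h_def)
    have eB: "(\<Inter>i\<in>B. iter_preimage X T i (h i)) = (\<Inter>i\<in>B. iter_preimage X T i (g i))"
      by (rule INF_cong[OF refl]) (use assms(1) in \<open>auto simp: h_def\<close>)
    have "v = topspace X \<inter> (\<Inter>i\<in>A \<union> B. iter_preimage X T i (h i))"
      unfolding ab(3) f(2) g(2) INT_Un eA eB by blast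
    then show "v \<in> join_cover X T U (A \<union> B)" unfolding join_cover_def
      by (intro CollectI exI[of _ h]) (use f(1) g(1) in \<open>auto simp: h_def\<close>)
  qed
  have un: "\<Union>V = topspace X"
  proof
    show "\<Union>V \<subseteq> topspace X" using sub J_sub by (meson Union_least subsetD)
    show "topspace X \<subseteq> \<Union>V"
    proof
      fix x assume "x \<in> topspace X"
      then obtain a b where "a \<in> W1" "b \<in> W2" "x \<in> a" "x \<in> b" using W1(4) W2(4) by blast
      thus "x \<in> \<Union>V" unfolding V_def by blast
    qed
  qed
  have fin: "finite V" using W1(2) W2(2) unfolding V_def by simp
  have "card V \<le> card (W1 \<times> W2)" unfolding V_def by (rule card_image_le) (use W1(2) W2(2) in simp)
  also have "\<dots> = card W1 * card W2" by (rule card_cartesian_product)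
  finally have cV: "card V \<le> card W1 * card W2" .
  have hc: "has_cover X (join_cover X T U (A \<union> B))" unfolding has_cover_def using sub fin un by blast
  show ?thesis using cover_num_le[OF sub fin un] W1(3) W2(3) hc cV by simp
qed

lemma empty_cover: "has_cover X (join_cover X T U {}) \<and> cover_num X (join_cover X T U {}) \<le> 1"
proof -
  have e: "join_cover X T U {} = {topspace X}" unfolding join_cover_def by auto
  have "cover_num X {topspace X} \<le> card {topspace X}" by (rule cover_num_le) auto
  thus ?thesis unfolding e has_cover_def by auto
qed

lemma zero_cover: "has_cover X (join_cover X T U {0})"
proof -
  have "compactin X (topspace X)" using cpt by (simp add: compact_space_def)
  then have cc: "\<And>\<U>. (\<forall>V \<in> \<U>. openin X V) \<and> topspace X \<subseteq> \<Union>\<U>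
          \<Longrightarrow> (\<exists>\<F>. finite \<F> \<and> \<F> \<subseteq> \<U> \<and> topspace X \<subseteq> \<Union>\<F>)"
    unfolding compactin_def by blast
  have ocU: "(\<forall>V \<in> U. openin X V) \<and> topspace X \<subseteq> \<Union>U" using oc unfolding open_cover_def by simp
  obtain F where F: "finite F" "F \<subseteq> U" "topspace X \<subseteq> \<Union>F"
    using cc[OF ocU] by blast
  define W where "W = (\<lambda>g. topspace X \<inter> g) ` F"
  have "W \<subseteq> join_cover X T U {0}"
  proof
    fix w assume "w \<in> W"
    then obtain g where g: "g \<in> F" "w = topspace X \<inter> g" unfolding W_def by blast
    have "w = topspace X \<inter> (\<Inter>i\<in>{0}. iter_preimage X T i ((\<lambda>_. g) i))"
      unfolding g(2) iter_preimage_def by auto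
    thus "w \<in> join_cover X T U {0}" unfolding join_cover_def
      by (intro CollectI exI[of _ "\<lambda>_. g"]) (use g(1) F(2) in auto)
  qed
  moreover have "finite W" using F(1) unfolding W_def by simp
  moreover have "\<Union>W = topspace X" using F(3) unfolding W_def by blast
  ultimately show ?thesis unfolding has_cover_def by blast
qed

lemma finite_cover: "finite S \<Longrightarrow> has_cover X (join_cover X T U S)"
proof (induction S rule: finite_induct)
  case empty thus ?case using empty_cover by blast
next
  case (insert k S)
  have "has_cover X (join_cover X T U ((+) k ` {0}))" using shift_cover[OF zero_cover] by blast
  hence "has_cover X (join_cover X T U {k})" by simp
  hence "has_cover X (join_cover X T U ({k} \<union> S))" using union_cover[of "{k}" S] insert by auto
  thus ?case by simp
qed


definition aa where "aa S = ln (real (cover_num X (join_cover X T U S)))"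

lemma aa_nonneg: "0 \<le> aa S" unfolding aa_def by (rule ln_nat_nonneg)

lemma aa_empty: "aa {} = 0"
proof -
  have "cover_num X (join_cover X T U {}) \<le> 1" using empty_cover by blast
  then show ?thesis unfolding aa_def by (cases "cover_num X (join_cover X T U {})") auto
qed

lemma aa_mono: assumes "finite B" "A \<subseteq> B" shows "aa A \<le> aa B"
proof -
  have "cover_num X (join_cover X T U A) \<le> cover_num X (join_cover X T U B)"
    using mono_cover[OF assms(2) finite_cover[OF assms(1)]] by blast
  then show ?thesis unfolding aa_def by (rule ln_nat_mono)
qed

lemma aa_union: assumes "finite A" "finite B" "A \<inter> B = {}" shows "aa (A \<union> B) \<le> aa A + aa B"
proof -
  have "cover_num X (join_cover X T U (A \<union> B)) \<le> cover_num X (join_cover X T U A) * cover_num X (join_cover X T U B)"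
    using union_cover[OF assms(3) finite_cover[OF assms(1)] finite_cover[OF assms(2)]] by blast
  then show ?thesis unfolding aa_def by (rule ln_nat_mult)
qed

lemma aa_shift: assumes "finite S" shows "aa ((+) n ` S) \<le> aa S"
proof -
  have "cover_num X (join_cover X T U ((+) n ` S)) \<le> cover_num X (join_cover X T U S)"
    using shift_cover[OF finite_cover[OF assms]] by blast
  then show ?thesis unfolding aa_def by (rule ln_nat_mono)
qed

definition EE where "EE n = (\<Sum>S\<in>Pow {..<n}. aa S)"

lemma EE_nonneg: "0 \<le> EE n" unfolding EE_def by (rule sum_nonneg) (rule aa_nonneg)

lemma EE_sub: "EE (n+m) \<le> 2^m * EE n + 2^n * EE m"
proof -
  let ?P = "Pow {..<n} \<times> Pow {..<m}"
  have "EE (n+m) = (\<Sum>p\<in>?P. aa (fst p \<union> (+) n ` snd p))"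
    unfolding EE_def
    apply (rule sum.reindex_bij_witness[where j="\<lambda>S. (S \<inter> {..<n}, {i. n+i \<in> S})" and i="\<lambda>p. fst p \<union> (+) n ` snd p"])
    subgoal for a
    proof -
      have "a \<inter> {..<n} \<union> (+) n ` {i. n+i \<in> a} = a" unfolding img_shift by auto
      then show ?thesis by simp
    qed
    subgoal for a by auto
    subgoal for b by (auto simp: image_iff)
    subgoal for b by auto
    subgoal for a
    proof -
      have "a \<inter> {..<n} \<union> (+) n ` {i. n+i \<in> a} = a" unfolding img_shift by auto
      then show ?thesis by simp
    qed
    done
  also have "\<dots> \<le> (\<Sum>p\<in>?P. aa (fst p) + aa (snd p))"
  proof (rule sum_mono)
    fix p assume p: "p \<in> ?P"
    have f1: "finite (fst p)" using p finite_subset[OF _ finite_lessThan] by auto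
    have f2: "finite (snd p)" using p finite_subset[OF _ finite_lessThan] by auto
    have d: "fst p \<inter> (+) n ` snd p = {}" using p by auto
    have "aa (fst p \<union> (+) n ` snd p) \<le> aa (fst p) + aa ((+) n ` snd p)"
      by (rule aa_union) (use f1 f2 d in auto)
    also have "aa ((+) n ` snd p) \<le> aa (snd p)" by (rule aa_shift[OF f2])
    finally show "aa (fst p \<union> (+) n ` snd p) \<le> aa (fst p) + aa (snd p)" by simp
  qed
  also have "\<dots> = (\<Sum>p\<in>?P. aa (fst p)) + (\<Sum>p\<in>?P. aa (snd p))" by (rule sum.distrib)
  also have "\<dots> = 2^m * EE n + 2^n * EE m"
    unfolding EE_def by (simp add: sum_fst_prod sum_snd_prod card_Pow)
  finally show ?thesis .
qed

definition ee where "ee n = (1/2)^n * EE n"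

lemma ee_sub: "ee (n+m) \<le> ee n + ee m"
proof -
  have "ee (n+m) \<le> (1/2)^(n+m) * (2^m * EE n + 2^n * EE m)"
    unfolding ee_def by (rule mult_left_mono[OF EE_sub]) simp
  also have "\<dots> = ((1/2)^(n+m) * 2^m) * EE n + ((1/2)^(m+n) * 2^n) * EE m"
    by (simp add: algebra_simps)
  also have "\<dots> = ee n + ee m"
  proof -
    have h1: "(1/2::real)^(n+m) * 2^m = (1/2)^n" by (rule half_pow)
    have h2: "(1/2::real)^(m+n) * 2^n = (1/2)^m" by (rule half_pow)
    show ?thesis unfolding ee_def h1 h2 by simp
  qed
  finally show ?thesis .
qed

lemma ee_nonneg: "0 \<le> ee n" unfolding ee_def using EE_nonneg by simp


definition AA where "AA n = (\<Sum>S\<in>{S. S \<subseteq> {..<n} \<and> 0 \<in> S}. aa S)"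
definition BB where "BB n = (\<Sum>S\<in>{S\<in>Pow {..<n}. 0 \<notin> S}. aa S)"

lemma EE_split: "EE n = AA n + BB n"
proof -
  have eq: "Pow {..<n} = {S. S \<subseteq> {..<n} \<and> 0 \<in> S} \<union> {S\<in>Pow {..<n}. 0 \<notin> S}" by auto
  have fA: "finite {S. S \<subseteq> {..<n} \<and> 0 \<in> S}" by (rule finite_subset[of _ "Pow {..<n}"]) auto
  have fB: "finite {S\<in>Pow {..<n}. 0 \<notin> S}" by (rule finite_subset[of _ "Pow {..<n}"]) auto
  show ?thesis unfolding EE_def AA_def BB_def
    by (subst eq, rule sum.union_disjoint[OF fA fB]) auto
qed

lemma AB_bounds: "BB n \<le> AA n \<and> AA n \<le> BB n + 2^n * aa {0}"
proof (cases "n = 0")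
  case True
  have e0: "{S. S \<subseteq> {..<n} \<and> 0 \<in> S} = {}" using True by auto
  have a: "AA n = 0" unfolding AA_def e0 by simp
  have "{S\<in>Pow {..<n}. 0 \<notin> S} = {{}}" using True by auto
  then have b: "BB n = 0" unfolding BB_def by (simp add: aa_empty)
  show ?thesis using a b aa_nonneg[of "{0}"] by simp
next
  case False
  let ?B = "{S\<in>Pow {..<n}. 0 \<notin> S}"
  have AAe: "AA n = (\<Sum>S\<in>?B. aa (insert 0 S))"
    unfolding AA_def
    by (rule sum.reindex_bij_witness[where i="insert 0" and j="\<lambda>S. S - {0}"]) (use False in \<open>auto simp: insert_absorb\<close>)
  have fin: "finite S" if "S \<in> ?B" for S using that finite_subset[OF _ finite_lessThan] by auto
  have fin2: "finite (insert 0 S)" if "S \<in> ?B" for S using fin[OF that] by simp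
  have "BB n \<le> AA n" unfolding AAe BB_def
    by (rule sum_mono) (rule aa_mono[OF fin2], auto)
  moreover have "AA n \<le> (\<Sum>S\<in>?B. aa S + aa {0})" unfolding AAe
  proof (rule sum_mono)
    fix S assume S: "S \<in> ?B"
    have "aa ({0} \<union> S) \<le> aa {0} + aa S" by (rule aa_union) (use S fin[OF S] in auto)
    then show "aa (insert 0 S) \<le> aa S + aa {0}" by simp
  qed
  moreover have "(\<Sum>S\<in>?B. aa S + aa {0}) = BB n + real (card ?B) * aa {0}"
    unfolding BB_def by (simp add: sum.distrib)
  moreover have "real (card ?B) * aa {0} \<le> 2^n * aa {0}"
  proof (rule mult_right_mono)
    have "card ?B \<le> card (Pow {..<n})" by (rule card_mono) auto
    then show "real (card ?B) \<le> 2^n" by (simp add: card_Pow)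
  qed (rule aa_nonneg)
  ultimately show ?thesis by linarith
qed

lemma main_result:
  assumes c: "\<And>n S. c n S = (1/2) ^ n"
  shows "convergent (asc_seq c X T U) \<and> convergent (acc_seq c X T U)
         \<and> Acc c X T U = (1/2) * Asc c X T U"
proof -
  have asc: "asc_seq c X T U = (\<lambda>n. ee n / real n)"
    by (rule ext) (simp add: asc_seq_def c ee_def EE_def aa_def sum_distrib_left sum_divide_distrib)
  have acc: "acc_seq c X T U = (\<lambda>n. (1/real n) * ((1/2)^n * AA n))"
    by (rule ext) (simp add: acc_seq_def c AA_def aa_def sum_distrib_left)
  obtain L where L: "(\<lambda>n. ee n / real n) \<longlonglongrightarrow> L"
    using fekete[OF ee_nonneg ee_sub] unfolding convergent_def by blast
  define d where "d n = 2 * ((1/real n) * ((1/2)^n * AA n)) - ee n / real n" for n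
  have d_eq: "d n = (1/real n) * ((1/2)^n * (AA n - BB n))" for n
    unfolding d_def ee_def EE_split by (cases "n = 0") (simp_all add: field_simps)
  have hp: "(1/2::real)^n * 2^n = 1" for n using half_pow[of 0 n] by simp
  have d0: "0 \<le> d n" for n unfolding d_eq using AB_bounds[of n] by simp
  have d1: "d n \<le> aa {0} / real n" for n
  proof -
    have "(1/2::real)^n * (AA n - BB n) \<le> (1/2)^n * (2^n * aa {0})"
      using AB_bounds[of n] by (intro mult_left_mono) auto
    also have "\<dots> = aa {0}" using hp[of n] by (simp add: mult.assoc[symmetric])
    finally have "(1/2::real)^n * (AA n - BB n) \<le> aa {0}" .
    then show ?thesis unfolding d_eq by (simp add: divide_right_mono)
  qed
  have "d \<longlonglongrightarrow> 0"
    by (rule tendsto_sandwich[of "\<lambda>n. 0" d sequentially "\<lambda>n. aa {0} / real n"])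
       (use d0 d1 lim_const_over_n in auto)
  then have "(\<lambda>n. (ee n / real n + d n) / 2) \<longlonglongrightarrow> (L + 0) / 2"
    using L by (intro tendsto_intros) auto
  moreover have "(\<lambda>n. (ee n / real n + d n) / 2) = acc_seq c X T U"
    unfolding acc d_def by (rule ext) simp
  ultimately have A: "acc_seq c X T U \<longlonglongrightarrow> L / 2" by simp
  have B: "asc_seq c X T U \<longlonglongrightarrow> L" using L asc by simp
  show ?thesis
    using A B limI[OF A] limI[OF B] unfolding Acc_def Asc_def convergent_def by auto
qed

end


theorem proposition2p5:
  fixes X :: "'a topology" and T :: "'a \<Rightarrow> 'a" and U :: "'a set set"
    and c :: "nat \<Rightarrow> nat set \<Rightarrow> real"
  assumes "compact_space X" and "Hausdorff_space X" and "continuous_map X X T"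
    and "\<And>n S. c n S = (1/2) ^ n"
    and "open_cover X U"
  shows "convergent (asc_seq c X T U) \<and> convergent (acc_seq c X T U)
         \<and> Acc c X T U = (1/2) * Asc c X T U"
  using main_result[OF assms(1) assms(3) assms(5) assms(4)] .

end
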